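(* Let $a_\star=-\lambda(2)/2$ if $\theta^*>2$ and $a_\star=v$ if $\theta^*\le 2$. Let $\varepsilon>0$ and $t_j=e^{a_\star j-\varepsilon j^{1/2}}$ for $j\in\mathbb N$. Then $\lim_{j\to\infty}\mathcal K^{(j)}_{t_j}(2)=0$ almost surely.
   Context: Standing setup. Let $(P_k)_{k\in\mathbb N}$ be nonnegative random variables with an arbitrary joint law such that $\sum_{k\ge1}P_k=1$ a.s. and $\mathbb E\,\#\{k:P_k>0\}>1$. Let $\mathbb V=\bigcup_{n\ge0}\mathbb N^n$ be the set of finite words (root $\varnothing$; $|u|$ is the length of $u$; $uk$ is the word $u$ followed by $k$), and let $((P_k(u))_{k\in\mathbb N})_{u\in\mathbb V}$ be independent copies of $(P_k)_{k\in\mathbb N}$. Set $P(\varnothing)=1$ and $P(uk)=P(u)P_k(u)$. For $|u|=j$ let $I_u=[\sum_{|v|=j,\,v\prec u}P(v),\ \sum_{|v|=j,\,v\preceq u}P(v))$, where $\prec$ is the lexicographic order on $\mathbb N^j$. Let $U_1,U_2,\dots$ be i.i.d. uniform on $[0,1]$, independent of the weights (ball $i$ falls into every box $u$ with $U_i\in I_u$). For $j,n,k\in\mathbb N$ let $K_n^{(j)}(k)=\#\{u:|u|=j,\ \#\{i\le n:U_i\in I_u\}\ge k\}$, and $K_n^{(j)}=K_n^{(j)}(1)$. Poissonization: let $(N_t)_{t\ge0}$ be a unit-rate Poisson process independent of the weights and of $(U_i)$; set $\mathcal K_t^{(j)}(k)=K_{N_t}^{(j)}(k)$ (with $K_0^{(j)}(k)=0$)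 and $\mathcal K_t^{(j)}=\mathcal K_t^{(j)}(1)$. Branching random walk: $V(u)=-\log P(u)$ ($V(u)=\infty$ if $P(u)=0$; sums over $|u|=j$ ignore such $u$). Nonlattice assumption: for all $a>0$, $b\in\mathbb R$, $\mathbb P(V(u)\in a\mathbb Z+b\text{ for all }|u|=1)<1$. Let $\lambda(\theta)=\log\mathbb E\sum_{|u|=1}e^{-\theta V(u)}\in(-\infty,\infty]$ and $\underline\theta=\inf\{\theta:\lambda(\theta)<\infty\}$ (so $\lambda(1)=0$, $\underline\theta\le 1$, and $\lambda$ is strictly convex and decreasing on its domain). It is assumed that there exists $\theta^*$ with $\theta^*\lambda'(\theta^* )-\lambda(\theta^* )=0$ (then $\theta^*>1$); put $v=-\lambda(\theta^* )/\theta^*$. *)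

theory Defs
  imports "HOL-Probability.Probability"
begin

text \<open>Sources of randomness: the weight sequence attached to each word (box) u,
  the ball positions U i, and the exponential inter-arrival times E i of the
  unit-rate Poisson process. All are encoded as random elements of the
  space nat => real (ball positions / arrival times as constant sequences),
  so that their joint independence can be stated with a single indep_vars.\<close>

datatype src = Wt "nat list" | Ball nat | Arr nat

definition src_var ::
  "(nat list \<Rightarrow> 'a \<Rightarrow> nat \<Rightarrow> real) \<Rightarrow> (nat \<Rightarrow> 'a \<Rightarrow> real) \<Rightarrow> (nat \<Rightarrow> 'a \<Rightarrow> real)
    \<Rightarrow> src \<Rightarrow> 'a \<Rightarrow> nat \<Rightarrow> real" where
  "src_var W U E s \<omega> = (case s of Wt u \<Rightarrow> W u \<omega> | Ball i \<Rightarrow> (\<lambda>_. U i \<omega>) | Arr i \<Rightarrow> (\<lambda>_. E i \<omega>))"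

text \<open>P(u): product of the weights along the path to u; W v \<omega> k is P_k(v).\<close>
definition Pw :: "(nat list \<Rightarrow> 'a \<Rightarrow> nat \<Rightarrow> real) \<Rightarrow> nat list \<Rightarrow> 'a \<Rightarrow> real" where
  "Pw W u \<omega> = (\<Prod>i<length u. W (take i u) \<omega> (u ! i))"

definition box_left :: "(nat list \<Rightarrow> 'a \<Rightarrow> nat \<Rightarrow> real) \<Rightarrow> nat list \<Rightarrow> 'a \<Rightarrow> real" where
  "box_left W u \<omega> = (\<Sum>\<^sub>\<infinity> v\<in>{v. length v = length u \<and> ord_class.lexordp v u}. Pw W v \<omega>)"

definition box :: "(nat list \<Rightarrow> 'a \<Rightarrow> nat \<Rightarrow> real) \<Rightarrow> nat list \<Rightarrow> 'a \<Rightarrow> real set" where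
  "box W u \<omega> = {box_left W u \<omega> ..< box_left W u \<omega> + Pw W u \<omega>}"

definition nballs :: "(nat list \<Rightarrow> 'a \<Rightarrow> nat \<Rightarrow> real) \<Rightarrow> (nat \<Rightarrow> 'a \<Rightarrow> real) \<Rightarrow> nat \<Rightarrow> nat list \<Rightarrow> 'a \<Rightarrow> nat" where
  "nballs W U n u \<omega> = card {i\<in>{1..n}. U i \<omega> \<in> box W u \<omega>}"

definition Kn :: "(nat list \<Rightarrow> 'a \<Rightarrow> nat \<Rightarrow> real) \<Rightarrow> (nat \<Rightarrow> 'a \<Rightarrow> real) \<Rightarrow> nat \<Rightarrow> nat \<Rightarrow> nat \<Rightarrow> 'a \<Rightarrow> nat" where
  "Kn W U j n k \<omega> = card {u. length u = j \<and> k \<le> nballs W U n u \<omega>}"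

definition Npois :: "(nat \<Rightarrow> 'a \<Rightarrow> real) \<Rightarrow> real \<Rightarrow> 'a \<Rightarrow> nat" where
  "Npois E t \<omega> = card {n. 1 \<le> n \<and> (\<Sum>i<n. E i \<omega>) \<le> t}"

definition Kpois :: "(nat list \<Rightarrow> 'a \<Rightarrow> nat \<Rightarrow> real) \<Rightarrow> (nat \<Rightarrow> 'a \<Rightarrow> real) \<Rightarrow> (nat \<Rightarrow> 'a \<Rightarrow> real)
    \<Rightarrow> nat \<Rightarrow> real \<Rightarrow> nat \<Rightarrow> 'a \<Rightarrow> nat" where
  "Kpois W U E j t k \<omega> = Kn W U j (Npois E t \<omega>) k \<omega>"

text \<open>E sum_{|u|=1} exp(-theta V(u)) for a law Q of (P_k)_k (terms with P_k = 0 ignored),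
  and lambda(theta) = log of it (only meaningful where finite).\<close>
definition Lsum :: "(nat \<Rightarrow> real) measure \<Rightarrow> real \<Rightarrow> ennreal" where
  "Lsum Q \<theta> = (\<integral>\<^sup>+ x. (\<Sum>k. ennreal (if 0 < x k then x k powr \<theta> else 0)) \<partial>Q)"

definition lam :: "(nat \<Rightarrow> real) measure \<Rightarrow> real \<Rightarrow> real" where
  "lam Q \<theta> = ln (enn2real (Lsum Q \<theta>))"

end

theory Submission
  imports Defs "HOL-Real_Asymp.Real_Asymp"
begin

abbreviation MS :: "(nat \<Rightarrow> real) measure" where "MS \<equiv> PiM UNIV (\<lambda>_. borel)"

locale setting = prob_space M for M :: "'a measure" +
  fixes Q :: "(nat \<Rightarrow> real) measure"
    and W :: "nat list \<Rightarrow> 'a \<Rightarrow> nat \<Rightarrow> real"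
    and U :: "nat \<Rightarrow> 'a \<Rightarrow> real"
    and E :: "nat \<Rightarrow> 'a \<Rightarrow> real"
  assumes indep: "indep_vars (\<lambda>_. MS) (src_var W U E) UNIV"
    and law: "\<And>u. distr M MS (W u) = Q"
    and nonnegQ: "AE x in Q. \<forall>k. 0 \<le> x k"
    and unif: "\<And>i. distributed M lborel (U i) (\<lambda>x. indicator {0..1::real} x)"
    and expo: "\<And>i. distributed M lborel (E i) (exponential_density 1)"
begin

abbreviation "X \<equiv> src_var W U E"

lemma X_meas[measurable]: "X s \<in> measurable M MS"
  using indep unfolding indep_vars_def by auto

lemma W_meas[measurable]: "W u \<in> measurable M MS"
  using X_meas[of "Wt u"] by (simp add: src_var_def[abs_def])

lemma W_comp_meas[measurable]: "(\<lambda>\<omega>. W u \<omega> k) \<in> borel_measurable M"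
  using measurable_compose[OF W_meas measurable_component_singleton[of k UNIV "\<lambda>_. borel"]] by simp

lemma E_meas[measurable]: "E i \<in> borel_measurable M"
  using distributed_measurable[OF expo[of i]] by simp

lemma U_meas[measurable]: "U i \<in> borel_measurable M"
  using distributed_measurable[OF unif[of i]] by simp

abbreviation "X0 \<equiv> (\<lambda>s \<omega>. X s \<omega> 0)"

lemma indep0: "indep_vars (\<lambda>_. borel) X0 UNIV"
  by (rule indep_vars_compose2[OF indep]) simp

lemma X0_Arr[simp]: "X (Arr i) \<omega> k = E i \<omega>" and X0_Ball[simp]: "X (Ball i) \<omega> k = U i \<omega>"
  and X_Wt[simp]: "X (Wt v) \<omega> = W v \<omega>"
  by (simp_all add: src_var_def fun_eq_iff)

lemma erlang_bound:
  assumes m: "1 \<le> m" and t: "0 \<le> t"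
  shows "emeasure M {\<omega>\<in>space M. (\<Sum>i<m. E i \<omega>) \<le> t} \<le> ennreal (t ^ m / fact (m - 1))"
proof -
  let ?I = "Arr ` {..<m}"
  have ind: "indep_vars (\<lambda>_. borel) X0 ?I"
    by (rule indep_vars_subset[OF indep0]) auto
  have "distributed M lborel (\<lambda>x. \<Sum>s\<in>?I. X0 s x) (erlang_density (card ?I - 1) 1)"
    by (rule exponential_distributed_sum[OF _ _ _ _ ind]) (use m expo in \<open>auto simp: lessThan_empty_iff\<close>)
  moreover have "card ?I = m" by (simp add: card_image inj_on_def)
  moreover have "(\<lambda>x. \<Sum>s\<in>?I. X0 s x) = (\<lambda>x. \<Sum>i<m. E i x)"
    by (simp add: sum.reindex inj_on_def)
  ultimately have D: "distributed M lborel (\<lambda>x. \<Sum>i<m. E i x) (erlang_density (m - 1) 1)"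
    by simp
  have "{\<omega>\<in>space M. (\<Sum>i<m. E i \<omega>) \<le> t} = (\<lambda>x. \<Sum>i<m. E i x) -` {..t} \<inter> space M" by auto
  hence "emeasure M {\<omega>\<in>space M. (\<Sum>i<m. E i \<omega>) \<le> t}
      = (\<integral>\<^sup>+x. ennreal (erlang_density (m - 1) 1 x) * indicator {..t} x \<partial>lborel)"
    using distributed_emeasure[OF D, of "{..t}"] by simp
  also have "\<dots> \<le> (\<integral>\<^sup>+x. ennreal (t ^ (m - 1) / fact (m - 1)) * indicator {0..t} x \<partial>lborel)"
  proof (rule nn_integral_mono)
    fix x :: real
    show "ennreal (erlang_density (m - 1) 1 x) * indicator {..t} x
        \<le> ennreal (t ^ (m - 1) / fact (m - 1)) * indicator {0..t} x"
    proof (cases "0 \<le> x \<and> x \<le> t")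
      case True
      have "x ^ (m - 1) * exp (- x) \<le> t ^ (m - 1) * 1"
        by (rule mult_mono) (use True in \<open>auto intro: power_mono\<close>)
      hence "erlang_density (m - 1) 1 x \<le> t ^ (m - 1) / fact (m - 1)"
        using True by (simp add: erlang_density_def divide_right_mono)
      thus ?thesis using True by (simp add: ennreal_leI)
    next
      case False
      thus ?thesis by (auto simp: erlang_density_def indicator_def)
    qed
  qed
  also have "\<dots> = ennreal (t ^ (m - 1) / fact (m - 1)) * ennreal t"
    using t by (simp add: nn_integral_cmult_indicator)
  also have "\<dots> = ennreal (t ^ (m - 1) / fact (m - 1) * t)"
    using t by (subst ennreal_mult) auto
  also have "t ^ (m - 1) / fact (m - 1) * t = t ^ m / fact (m - 1)"
    using m by (cases m) auto
  finally show ?thesis .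
qed

end

lemma card_ge2_ex: assumes "finite A" "2 \<le> card A" shows "\<exists>x\<in>A. \<exists>y\<in>A. x \<noteq> y"
proof (rule ccontr)
  assume "\<not> ?thesis"
  hence "card A \<le> Suc 0" using card_le_Suc0_iff_eq[OF assms(1)] by blast
  with assms show False by simp
qed

lemma det_lemma:
  fixes W :: "nat list \<Rightarrow> 'a \<Rightarrow> nat \<Rightarrow> real"
  assumes Enn: "\<And>i. 0 \<le> E i \<omega>" and m: "1 \<le> m"
    and K: "Kpois W U E j t 2 \<omega> \<noteq> 0"
  shows "(\<Sum>i<m. E i \<omega>) \<le> t \<or> (\<exists>u. length u = j \<and> (\<exists>i k. i \<in> {1..m-1} \<and> k \<in> {1..m-1} \<and> i \<noteq> k
            \<and> U i \<omega> \<in> box W u \<omega> \<and> U k \<omega> \<in> box W u \<omega>))"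
proof -
  define N where "N = Npois E t \<omega>"
  from K have "{u. length u = j \<and> 2 \<le> nballs W U N u \<omega>} \<noteq> {}"
    unfolding Kpois_def Kn_def N_def by (metis card.empty)
  then obtain u where u: "length u = j" "2 \<le> nballs W U N u \<omega>" by auto
  let ?A = "{i\<in>{1..N}. U i \<omega> \<in> box W u \<omega>}"
  have "2 \<le> card ?A" using u(2) by (simp add: nballs_def)
  then obtain i k where ik: "i \<in> ?A" "k \<in> ?A" "i \<noteq> k" using card_ge2_ex[of ?A] by auto
  show ?thesis
  proof (cases "m \<le> N")
    case True
    let ?F = "{n. 1 \<le> n \<and> (\<Sum>i<n. E i \<omega>) \<le> t}"
    have cF: "card ?F = N" by (simp add: N_def Npois_def)
    hence fin: "finite ?F" using True m by (metis card.infinite le_zero_eq not_one_le_zero)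
    have "\<exists>n\<in>?F. m \<le> n"
    proof (rule ccontr)
      assume "\<not> ?thesis"
      hence "?F \<subseteq> {1..m-1}" by auto
      hence "card ?F \<le> m - 1" using card_mono[of "{1..m-1}" ?F] by auto
      with cF True m show False by linarith
    qed
    then obtain n where n: "n \<in> ?F" "m \<le> n" by blast
    have "(\<Sum>i<m. E i \<omega>) \<le> (\<Sum>i<n. E i \<omega>)"
      by (rule sum_mono2) (use n Enn in auto)
    with n show ?thesis by auto
  next
    case False
    hence "i \<in> {1..m-1}" "k \<in> {1..m-1}" using ik by auto
    with ik u show ?thesis by blast
  qed
qed

context setting begin

lemma AE_E_nonneg: "AE \<omega> in M. 0 \<le> E i \<omega>"
proof -
  have "AE x in distr M lborel (E i). 0 \<le> x"
    unfolding distributed_distr_eq_density[OF expo[of i]]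
    by (subst AE_density) (auto simp: exponential_density_def)
  thus ?thesis by (rule AE_distrD[OF E_meas[unfolded measurable_lborel1[symmetric]]])
qed

lemma AE_W_nonneg: "AE \<omega> in M. \<forall>k. 0 \<le> W v \<omega> k"
proof -
  have "AE x in distr M MS (W v). \<forall>k. 0 \<le> x k" using nonnegQ by (simp only: law)
  thus ?thesis by (rule AE_distrD[OF W_meas])
qed

lemma AE_good: "AE \<omega> in M. (\<forall>i. 0 \<le> E i \<omega>) \<and> (\<forall>v k. 0 \<le> W v \<omega> k)"
  using AE_E_nonneg AE_W_nonneg by (simp add: AE_all_countable)

end

lemma infsum_nonneg_enn:
  fixes f :: "'b \<Rightarrow> real"
  assumes nn: "\<And>x. x \<in> A \<Longrightarrow> 0 \<le> f x"
  shows "infsum f A = enn2real (\<integral>\<^sup>+x. ennreal (f x) \<partial>count_space A)"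
proof (cases "f summable_on A")
  case True
  hence "(\<lambda>x. norm (f x)) summable_on A" using summable_on_iff_abs_summable_on_real by blast
  hence abs: "Infinite_Set_Sum.abs_summable_on f A" using abs_summable_equivalent by blast
  have "(\<integral>\<^sup>+x. ennreal (f x) \<partial>count_space A) = ennreal (infsetsum f A)"
    by (rule nn_integral_conv_infsetsum[OF abs nn])
  moreover have "0 \<le> infsetsum f A" using nn by (simp add: infsetsum_nonneg)
  ultimately show ?thesis using infsetsum_infsum[OF abs] by simp
next
  case False
  have "(\<integral>\<^sup>+x. ennreal (f x) \<partial>count_space A) = \<infinity>"
  proof (rule ccontr)
    assume "(\<integral>\<^sup>+x. ennreal (f x) \<partial>count_space A) \<noteq> \<infinity>"
    hence "integrable (count_space A) f"
      using nn by (intro integrableI_nonneg) (auto simp: AE_count_space top.not_eq_extremum)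
    hence "Infinite_Set_Sum.abs_summable_on f A" by (simp add: abs_summable_on_def)
    hence "f summable_on A"
      using abs_summable_equivalent summable_on_iff_abs_summable_on_real by blast
    with False show False by simp
  qed
  with False show ?thesis by (simp add: infsum_not_exists)
qed

lemma meas_count_nn:
  fixes f :: "nat list \<Rightarrow> 'c \<Rightarrow> ennreal"
  assumes "\<And>v. f v \<in> borel_measurable N"
  shows "(\<lambda>y. \<integral>\<^sup>+v. f v y \<partial>count_space A) \<in> borel_measurable N"
proof -
  let ?e = "from_nat_into (UNIV :: nat list set)"
  have bij: "bij_betw ?e UNIV UNIV"
    by (rule bij_betw_from_nat_into) (auto simp: infinite_UNIV_listI)
  have eq: "(\<integral>\<^sup>+v. f v y \<partial>count_space A) = (\<Sum>n. f (?e n) y * indicator A (?e n))" for y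
  proof -
    have "(\<integral>\<^sup>+v. f v y \<partial>count_space A) = (\<integral>\<^sup>+v. f v y * indicator A v \<partial>count_space UNIV)"
      by (cases "A = UNIV") (simp_all add: nn_integral_count_space_indicator)
    also have "\<dots> = (\<integral>\<^sup>+n. f (?e n) y * indicator A (?e n) \<partial>count_space UNIV)"
      by (rule nn_integral_bij_count_space[OF bij, symmetric])
    also have "\<dots> = (\<Sum>n. f (?e n) y * indicator A (?e n))"
      by (rule nn_integral_count_space_nat)
    finally show ?thesis .
  qed
  show ?thesis unfolding eq
    apply (rule borel_measurable_suminf_order)
    apply (rule borel_measurable_times_ennreal[OF assms])
    by simp
qed

abbreviation MW :: "(src \<Rightarrow> nat \<Rightarrow> real) measure" where "MW \<equiv> PiM (range Wt) (\<lambda>_. MS)"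

definition FP :: "nat list \<Rightarrow> (src \<Rightarrow> nat \<Rightarrow> real) \<Rightarrow> real" where
  "FP u y = (\<Prod>i<length u. max 0 (y (Wt (take i u)) (u ! i)))"

definition FL :: "nat list \<Rightarrow> (src \<Rightarrow> nat \<Rightarrow> real) \<Rightarrow> real" where
  "FL u y = infsum (\<lambda>v. FP v y) {v. length v = length u \<and> ord_class.lexordp v u}"

lemma FP_nonneg: "0 \<le> FP u y" unfolding FP_def by (intro prod_nonneg) auto

lemma comp_meas[measurable]: "(\<lambda>y. y (Wt v) k) \<in> borel_measurable MW"
proof -
  have "(\<lambda>y. y (Wt v)) \<in> measurable MW MS"
    by (rule measurable_component_singleton) simp
  from measurable_compose[OF this measurable_component_singleton[of k UNIV "\<lambda>_. borel"]]
  show ?thesis by simp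
qed

lemma FP_meas[measurable]: "FP u \<in> borel_measurable MW"
  unfolding FP_def by measurable

lemma FL_meas[measurable]: "FL u \<in> borel_measurable MW"
proof -
  have "FL u = (\<lambda>y. enn2real (\<integral>\<^sup>+v. ennreal (FP v y) \<partial>count_space {v. length v = length u \<and> ord_class.lexordp v u}))"
    unfolding FL_def by (intro ext infsum_nonneg_enn FP_nonneg)
  also have "\<dots> \<in> borel_measurable MW"
    by (intro borel_measurable_enn2real meas_count_nn) measurable
  finally show ?thesis .
qed

context setting begin

definition Y :: "'a \<Rightarrow> src \<Rightarrow> nat \<Rightarrow> real" where
  "Y \<omega> = restrict (\<lambda>s. X s \<omega>) (range Wt)"

lemma Y_meas[measurable]: "Y \<in> measurable M MW"
  unfolding Y_def by (rule measurable_restrict) simp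

lemma Pw_FP: assumes "\<forall>v k. 0 \<le> W v \<omega> k" shows "Pw W u \<omega> = FP u (Y \<omega>)"
  using assms unfolding Pw_def FP_def Y_def by (intro prod.cong) auto

lemma box_FP: assumes "\<forall>v k. 0 \<le> W v \<omega> k"
  shows "box W u \<omega> = {FL u (Y \<omega>) ..< FL u (Y \<omega>) + FP u (Y \<omega>)}"
  using Pw_FP[OF assms] unfolding box_def box_left_def FL_def by simp

end

context setting begin

lemma unif_Ico:
  assumes "a \<le> b"
  shows "emeasure M {\<omega>\<in>space M. U i \<omega> \<in> {a..<b}} \<le> ennreal (b - a)"
proof -
  have "emeasure M {\<omega>\<in>space M. U i \<omega> \<in> {a..<b}} = emeasure M (U i -` {a..<b} \<inter> space M)"
    by (auto intro!: arg_cong[where f="emeasure M"])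
  also have "\<dots> = (\<integral>\<^sup>+x. (indicator {0..1::real} x :: ennreal) * indicator {a..<b} x \<partial>lborel)"
    by (rule distributed_emeasure[OF unif]) simp
  also have "\<dots> \<le> (\<integral>\<^sup>+x. indicator {a..<b} x \<partial>lborel)"
    by (intro nn_integral_mono) (auto simp: indicator_def)
  also have "\<dots> = ennreal (b - a)" using assms by simp
  finally show ?thesis .
qed

lemma two_unif:
  assumes "i \<noteq> k" "a \<le> b"
  shows "emeasure M {\<omega>\<in>space M. U i \<omega> \<in> {a..<b} \<and> U k \<omega> \<in> {a..<b}} \<le> ennreal ((b - a)^2)"
proof -
  let ?J = "{Ball i, Ball k}"
  have "prob (\<Inter>s\<in>?J. X0 s -` {a..<b} \<inter> space M) = (\<Prod>s\<in>?J. prob (X0 s -` {a..<b} \<inter> space M))"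
    by (rule indep_varsD[OF indep0]) auto
  moreover have "(\<Inter>s\<in>?J. X0 s -` {a..<b} \<inter> space M) = {\<omega>\<in>space M. U i \<omega> \<in> {a..<b} \<and> U k \<omega> \<in> {a..<b}}"
    by auto
  moreover have "(\<Prod>s\<in>?J. prob (X0 s -` {a..<b} \<inter> space M))
      = prob {\<omega>\<in>space M. U i \<omega> \<in> {a..<b}} * prob {\<omega>\<in>space M. U k \<omega> \<in> {a..<b}}"
    using assms(1) by (simp add: Int_commute Collect_conj_eq vimage_def)
  ultimately have eq: "prob {\<omega>\<in>space M. U i \<omega> \<in> {a..<b} \<and> U k \<omega> \<in> {a..<b}}
      = prob {\<omega>\<in>space M. U i \<omega> \<in> {a..<b}} * prob {\<omega>\<in>space M. U k \<omega> \<in> {a..<b}}" by simp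
  have pi: "prob {\<omega>\<in>space M. U i' \<omega> \<in> {a..<b}} \<le> b - a" for i'
  proof -
    have "ennreal (prob {\<omega>\<in>space M. U i' \<omega> \<in> {a..<b}}) \<le> ennreal (b - a)"
      using unif_Ico[OF assms(2), of i'] by (simp add: emeasure_eq_measure)
    thus ?thesis using assms(2) ennreal_le_iff by simp
  qed
  have "prob {\<omega>\<in>space M. U i \<omega> \<in> {a..<b} \<and> U k \<omega> \<in> {a..<b}} \<le> (b - a) * (b - a)"
    unfolding eq using assms(2) by (intro mult_mono pi) auto
  thus ?thesis using assms(2) by (simp add: emeasure_eq_measure power2_eq_square ennreal_leI)
qed

definition Iv :: "nat list \<Rightarrow> (src \<Rightarrow> nat \<Rightarrow> real) \<Rightarrow> real set" where
  "Iv u y = {FL u y ..< FL u y + FP u y}"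

lemma pair_bound:
  assumes ik: "i \<noteq> k"
  shows "emeasure M {\<omega>\<in>space M. FP u (Y \<omega>) \<le> c \<and> U i \<omega> \<in> Iv u (Y \<omega>) \<and> U k \<omega> \<in> Iv u (Y \<omega>)}
     \<le> (\<integral>\<^sup>+\<omega>. ennreal ((FP u (Y \<omega>))^2) * indicator {\<omega>. FP u (Y \<omega>) \<le> c} \<omega> \<partial>M)"
proof -
  let ?B = "{Ball i, Ball k}"
  define Z where "Z \<omega> = restrict (\<lambda>s. X s \<omega>) ?B" for \<omega>
  let ?MZ = "PiM ?B (\<lambda>_. MS)"
  have iv: "indep_var MW Y ?MZ Z"
    unfolding Y_def Z_def by (rule indep_var_restrict[OF indep]) auto
  have Zm[measurable]: "Z \<in> measurable M ?MZ"
    unfolding Z_def by (rule measurable_restrict) simp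
  have dist: "distr M MW Y \<Otimes>\<^sub>M distr M ?MZ Z = distr M (MW \<Otimes>\<^sub>M ?MZ) (\<lambda>x. (Y x, Z x))"
    using iv by (simp add: indep_var_distribution_eq)
  interpret PZ: prob_space "distr M ?MZ Z" by (rule prob_space_distr) simp
  interpret PY: prob_space "distr M MW Y" by (rule prob_space_distr) simp
  have zi[measurable]: "(\<lambda>z. z (Ball j) 0) \<in> borel_measurable ?MZ" if "j \<in> {i, k}" for j
  proof -
    have "(\<lambda>z. z (Ball j)) \<in> measurable ?MZ MS"
      by (rule measurable_component_singleton) (use that in auto)
    from measurable_compose[OF this measurable_component_singleton[of 0 UNIV "\<lambda>_. borel"]]
    show ?thesis by simp
  qed
  have m1[measurable]: "(\<lambda>p. FP u (fst p)) \<in> borel_measurable (MW \<Otimes>\<^sub>M ?MZ)"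
    by (rule measurable_compose[OF measurable_fst FP_meas])
  have m2[measurable]: "(\<lambda>p. FL u (fst p)) \<in> borel_measurable (MW \<Otimes>\<^sub>M ?MZ)"
    by (rule measurable_compose[OF measurable_fst FL_meas])
  have m3[measurable]: "(\<lambda>p. snd p (Ball j) 0) \<in> borel_measurable (MW \<Otimes>\<^sub>M ?MZ)" if "j \<in> {i, k}" for j
    by (rule measurable_compose[OF measurable_snd zi[OF that]])
  define T where "T = {p \<in> space (MW \<Otimes>\<^sub>M ?MZ). FP u (fst p) \<le> c \<and>
      FL u (fst p) \<le> snd p (Ball i) 0 \<and> snd p (Ball i) 0 < FL u (fst p) + FP u (fst p) \<and>
      FL u (fst p) \<le> snd p (Ball k) 0 \<and> snd p (Ball k) 0 < FL u (fst p) + FP u (fst p)}"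
  have Tm: "T \<in> sets (MW \<Otimes>\<^sub>M ?MZ)"
    unfolding T_def by measurable
  have ZB: "Z \<omega> (Ball j) 0 = U j \<omega>" if "j \<in> {i, k}" for j \<omega>
    using that by (auto simp: Z_def)
  have "{\<omega>\<in>space M. FP u (Y \<omega>) \<le> c \<and> U i \<omega> \<in> Iv u (Y \<omega>) \<and> U k \<omega> \<in> Iv u (Y \<omega>)}
      = (\<lambda>x. (Y x, Z x)) -` T \<inter> space M"
    using measurable_space[OF Y_meas] measurable_space[OF Zm] ZB
    by (auto simp: T_def space_pair_measure Iv_def)
  hence "emeasure M {\<omega>\<in>space M. FP u (Y \<omega>) \<le> c \<and> U i \<omega> \<in> Iv u (Y \<omega>) \<and> U k \<omega> \<in> Iv u (Y \<omega>)}
      = emeasure (distr M (MW \<Otimes>\<^sub>M ?MZ) (\<lambda>x. (Y x, Z x))) T"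
    using Tm by (simp add: emeasure_distr)
  also have "\<dots> = emeasure (distr M MW Y \<Otimes>\<^sub>M distr M ?MZ Z) T" by (simp add: dist)
  also have "\<dots> = (\<integral>\<^sup>+y. emeasure (distr M ?MZ Z) (Pair y -` T) \<partial>distr M MW Y)"
    by (rule PZ.emeasure_pair_measure_alt) (use Tm in simp)
  also have "\<dots> \<le> (\<integral>\<^sup>+y. ennreal ((FP u y)^2) * indicator {y. FP u y \<le> c} y \<partial>distr M MW Y)"
  proof (rule nn_integral_mono)
    fix y assume y: "y \<in> space (distr M MW Y)"
    show "emeasure (distr M ?MZ Z) (Pair y -` T) \<le> ennreal ((FP u y)^2) * indicator {y. FP u y \<le> c} y"
    proof (cases "FP u y \<le> c")
      case False
      hence "Pair y -` T = {}" by (auto simp: T_def)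
      thus ?thesis by simp
    next
      case True
      let ?S = "{z \<in> space ?MZ. FL u y \<le> z (Ball i) 0 \<and> z (Ball i) 0 < FL u y + FP u y \<and>
          FL u y \<le> z (Ball k) 0 \<and> z (Ball k) 0 < FL u y + FP u y}"
      have "Pair y -` T = ?S" using True y by (auto simp: T_def space_pair_measure)
      moreover have "?S \<in> sets ?MZ" by measurable
      ultimately have "emeasure (distr M ?MZ Z) (Pair y -` T) = emeasure M (Z -` ?S \<inter> space M)"
        by (simp add: emeasure_distr)
      also have "Z -` ?S \<inter> space M = {\<omega>\<in>space M. U i \<omega> \<in> {FL u y..<FL u y + FP u y} \<and> U k \<omega> \<in> {FL u y..<FL u y + FP u y}}"
        using measurable_space[OF Zm] ZB by (auto simp: Iv_def)
      also have "emeasure M \<dots> \<le> ennreal ((FL u y + FP u y - FL u y)^2)"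
        by (rule two_unif[OF ik]) (simp add: FP_nonneg)
      finally show ?thesis using True by simp
    qed
  qed
  also have "\<dots> = (\<integral>\<^sup>+\<omega>. ennreal ((FP u (Y \<omega>))^2) * indicator {\<omega>. FP u (Y \<omega>) \<le> c} \<omega> \<partial>M)"
    by (subst nn_integral_distr) (simp_all add: indicator_def)
  finally show ?thesis .
qed

end

lemma sum_lists:
  fixes f :: "nat \<Rightarrow> ennreal"
  shows "(\<integral>\<^sup>+u. (\<Prod>i<j. f (u!i)) \<partial>count_space {u. length u = j}) = (\<integral>\<^sup>+k. f k \<partial>count_space UNIV) ^ j"
proof (induction j)
  case 0
  have "{u::nat list. length u = 0} = {[]}" by auto
  thus ?case by (simp add: nn_integral_count_space_finite)
next
  case (Suc j)
  let ?L = "{u::nat list. length u = j}"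
  let ?g = "\<lambda>p::nat \<times> nat list. fst p # snd p"
  have bij: "bij_betw ?g (UNIV \<times> ?L) {u. length u = Suc j}"
    by (rule bij_betwI[where g="\<lambda>u. (hd u, tl u)"]) (auto simp: length_Suc_conv)
  have cL: "countable ?L" by simp
  interpret CL: sigma_finite_measure "count_space ?L"
    by (rule sigma_finite_measure_count_space_countable) simp
  have "(\<integral>\<^sup>+u. (\<Prod>i<Suc j. f (u!i)) \<partial>count_space {u. length u = Suc j})
      = (\<integral>\<^sup>+p. (\<Prod>i<Suc j. f (?g p ! i)) \<partial>count_space (UNIV \<times> ?L))"
    by (rule nn_integral_bij_count_space[OF bij, symmetric])
  also have "\<dots> = (\<integral>\<^sup>+p. (\<Prod>i<Suc j. f (?g p ! i)) \<partial>(count_space UNIV \<Otimes>\<^sub>M count_space ?L))"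
    by (simp only: pair_measure_countable[OF countableI_type cL])
  also have "\<dots> = (\<integral>\<^sup>+k. \<integral>\<^sup>+v. (\<Prod>i<Suc j. f (?g (k, v) ! i)) \<partial>count_space ?L \<partial>count_space UNIV)"
    apply (rule CL.nn_integral_fst[symmetric])
    apply (simp only: pair_measure_countable[OF countableI_type cL] measurable_count_space_eq1)
    by simp
  also have "\<dots> = (\<integral>\<^sup>+k. f k * \<integral>\<^sup>+v. (\<Prod>i<j. f (v ! i)) \<partial>count_space ?L \<partial>count_space UNIV)"
  proof (rule nn_integral_cong)
    fix k
    have "(\<integral>\<^sup>+v. (\<Prod>i<Suc j. f (?g (k, v) ! i)) \<partial>count_space ?L)
        = (\<integral>\<^sup>+v. f k * (\<Prod>i<j. f (v ! i)) \<partial>count_space ?L)"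
      by (intro nn_integral_cong) (simp only: prod.lessThan_Suc_shift fst_conv snd_conv nth_Cons_0 nth_Cons_Suc)
    also have "\<dots> = f k * (\<integral>\<^sup>+v. (\<Prod>i<j. f (v ! i)) \<partial>count_space ?L)"
      by (rule nn_integral_cmult) simp
    finally show "(\<integral>\<^sup>+v. (\<Prod>i<Suc j. f (?g (k, v) ! i)) \<partial>count_space ?L)
        = f k * (\<integral>\<^sup>+v. (\<Prod>i<j. f (v ! i)) \<partial>count_space ?L)" .
  qed
  also have "\<dots> = (\<integral>\<^sup>+k. f k \<partial>count_space UNIV) ^ Suc j"
    unfolding Suc.IH power_Suc by (rule nn_integral_multc) simp
  finally show ?case .
qed
context setting begin

definition fQ :: "real \<Rightarrow> nat \<Rightarrow> ennreal" where
  "fQ \<theta> k = (\<integral>\<^sup>+x. ennreal (max 0 (x k) powr \<theta>) \<partial>Q)"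

lemma Q_eq: "Q = distr M MS (W [])" using law[of "[]"] by simp

lemma Lsum_eq: "Lsum Q \<theta> = (\<integral>\<^sup>+k. fQ \<theta> k \<partial>count_space UNIV)"
proof -
  have "Lsum Q \<theta> = (\<integral>\<^sup>+x. (\<Sum>k. ennreal (max 0 (x k) powr \<theta>)) \<partial>Q)"
    unfolding Lsum_def by (intro nn_integral_cong suminf_cong) (auto simp: max_def)
  also have "\<dots> = (\<Sum>k. fQ \<theta> k)"
    unfolding fQ_def apply (rule nn_integral_suminf) apply (subst Q_eq) by simp
  also have "\<dots> = (\<integral>\<^sup>+k. fQ \<theta> k \<partial>count_space UNIV)"
    by (rule nn_integral_count_space_nat[symmetric])
  finally show ?thesis .
qed

lemma exp_prod:
  "(\<integral>\<^sup>+\<omega>. ennreal (FP u (Y \<omega>) powr \<theta>) \<partial>M) = (\<Prod>i<length u. fQ \<theta> (u!i))"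
proof -
  define idx where "idx s = (case s of Wt v \<Rightarrow> length v | _ \<Rightarrow> 0)" for s
  define g where "g s x = ennreal (max 0 (x (u ! idx s)) powr \<theta>)" for s and x :: "nat \<Rightarrow> real"
  let ?I = "(\<lambda>i. Wt (take i u)) ` {..<length u}"
  have inj: "inj_on (\<lambda>i. Wt (take i u)) {..<length u}"
    by (auto simp: inj_on_def dest: arg_cong[where f=length])
  have ind: "indep_vars (\<lambda>_. borel) (\<lambda>s \<omega>. g s (X s \<omega>)) ?I"
    by (rule indep_vars_subset[OF indep_vars_compose2[OF indep]]) (auto simp: g_def)
  have "(\<integral>\<^sup>+\<omega>. (\<Prod>s\<in>?I. g s (X s \<omega>)) \<partial>M) = (\<Prod>s\<in>?I. \<integral>\<^sup>+\<omega>. g s (X s \<omega>) \<partial>M)"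
    by (rule indep_vars_nn_integral[OF _ ind]) auto
  moreover have "(\<Prod>s\<in>?I. g s (X s \<omega>)) = ennreal (FP u (Y \<omega>) powr \<theta>)" for \<omega>
  proof -
    have "(\<Prod>s\<in>?I. g s (X s \<omega>)) = (\<Prod>i<length u. ennreal (max 0 (W (take i u) \<omega> (u!i)) powr \<theta>))"
      by (simp add: prod.reindex[OF inj] g_def idx_def)
    also have "\<dots> = ennreal (\<Prod>i<length u. max 0 (W (take i u) \<omega> (u!i)) powr \<theta>)"
      by (rule prod_ennreal) simp
    also have "\<dots> = ennreal (FP u (Y \<omega>) powr \<theta>)"
      by (simp add: FP_def Y_def prod_powr_distrib)
    finally show ?thesis .
  qed
  moreover have "(\<Prod>s\<in>?I. \<integral>\<^sup>+\<omega>. g s (X s \<omega>) \<partial>M) = (\<Prod>i<length u. fQ \<theta> (u!i))"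
  proof -
    have "(\<Prod>s\<in>?I. \<integral>\<^sup>+\<omega>. g s (X s \<omega>) \<partial>M)
       = (\<Prod>i<length u. \<integral>\<^sup>+\<omega>. ennreal (max 0 (W (take i u) \<omega> (u!i)) powr \<theta>) \<partial>M)"
      by (simp add: prod.reindex[OF inj] g_def idx_def)
    also have "\<dots> = (\<Prod>i<length u. fQ \<theta> (u!i))"
    proof (rule prod.cong)
      fix i assume "i \<in> {..<length u}"
      have "fQ \<theta> (u!i) = (\<integral>\<^sup>+x. ennreal (max 0 (x (u!i)) powr \<theta>) \<partial>distr M MS (W (take i u)))"
        unfolding fQ_def law ..
      also have "\<dots> = (\<integral>\<^sup>+\<omega>. ennreal (max 0 (W (take i u) \<omega> (u!i)) powr \<theta>) \<partial>M)"
        by (subst nn_integral_distr) auto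
      finally show "(\<integral>\<^sup>+\<omega>. ennreal (max 0 (W (take i u) \<omega> (u!i)) powr \<theta>) \<partial>M) = fQ \<theta> (u!i)" ..
    qed simp
    finally show ?thesis .
  qed
  ultimately show ?thesis by simp
qed

lemma sum_exp_prod:
  "(\<integral>\<^sup>+u. (\<integral>\<^sup>+\<omega>. ennreal (FP u (Y \<omega>) powr \<theta>) \<partial>M) \<partial>count_space {u. length u = j}) = Lsum Q \<theta> ^ j"
proof -
  have "(\<integral>\<^sup>+u. (\<integral>\<^sup>+\<omega>. ennreal (FP u (Y \<omega>) powr \<theta>) \<partial>M) \<partial>count_space {u. length u = j})
      = (\<integral>\<^sup>+u. (\<Prod>i<j. fQ \<theta> (u!i)) \<partial>count_space {u. length u = j})"
    by (intro nn_integral_cong) (simp add: exp_prod)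
  thus ?thesis by (simp add: sum_lists Lsum_eq)
qed

end

lemma union_bound:
  assumes I: "countable I" and C: "\<And>u. u \<in> I \<Longrightarrow> C u \<in> sets N"
  shows "emeasure N (\<Union>u\<in>I. C u) \<le> (\<integral>\<^sup>+u. emeasure N (C u) \<partial>count_space I)"
proof -
  have UN: "(\<Union>u\<in>I. C u) \<in> sets N" by (rule sets.countable_UN''[OF I C])
  have "emeasure N (\<Union>u\<in>I. C u) = (\<integral>\<^sup>+\<omega>. indicator (\<Union>u\<in>I. C u) \<omega> \<partial>N)"
    using UN by simp
  also have "\<dots> \<le> (\<integral>\<^sup>+\<omega>. (\<integral>\<^sup>+u. indicator (C u) \<omega> \<partial>count_space I) \<partial>N)"
  proof (rule nn_integral_mono)
    fix \<omega>
    show "indicator (\<Union>u\<in>I. C u) \<omega> \<le> (\<integral>\<^sup>+u. indicator (C u) \<omega> \<partial>count_space I)"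
    proof (cases "\<omega> \<in> (\<Union>u\<in>I. C u)")
      case True
      then obtain u0 where u0: "u0 \<in> I" "\<omega> \<in> C u0" by auto
      have "(\<integral>\<^sup>+u. indicator (C u) \<omega> * indicator {u0} u \<partial>count_space I) = 1"
        using u0 by (subst nn_integral_indicator_singleton) auto
      moreover have "(\<integral>\<^sup>+u. indicator (C u) \<omega> * indicator {u0} u \<partial>count_space I)
          \<le> (\<integral>\<^sup>+u. indicator (C u) \<omega> \<partial>count_space I)"
        by (intro nn_integral_mono) (auto simp: indicator_def)
      ultimately show ?thesis using True by simp
    qed simp
  qed
  also have "\<dots> = (\<integral>\<^sup>+u. (\<integral>\<^sup>+\<omega>. indicator (C u) \<omega> \<partial>N) \<partial>count_space I)"
    by (rule nn_integral_count_space_nn_integral[OF I]) (use C in simp)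
  also have "\<dots> = (\<integral>\<^sup>+u. emeasure N (C u) \<partial>count_space I)"
    by (intro nn_integral_cong) (use C in simp)
  finally show ?thesis .
qed

context setting begin

definition Cu :: "nat \<Rightarrow> nat list \<Rightarrow> 'a set" where
  "Cu m u = {\<omega>\<in>space M. 1 / real m < FP u (Y \<omega>)} \<union>
     (\<Union>p\<in>{p. fst p \<in> {1..m} \<and> snd p \<in> {1..m} \<and> fst p \<noteq> snd p}.
        {\<omega>\<in>space M. FP u (Y \<omega>) \<le> 1 / real m \<and> U (fst p) \<omega> \<in> Iv u (Y \<omega>) \<and> U (snd p) \<omega> \<in> Iv u (Y \<omega>)})"

lemma FPY_meas[measurable]: "(\<lambda>\<omega>. FP u (Y \<omega>)) \<in> borel_measurable M"
  by (rule measurable_compose[OF Y_meas FP_meas])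

lemma FLY_meas[measurable]: "(\<lambda>\<omega>. FL u (Y \<omega>)) \<in> borel_measurable M"
  by (rule measurable_compose[OF Y_meas FL_meas])

lemma pair_set_meas: "{\<omega>\<in>space M. FP u (Y \<omega>) \<le> c \<and> U i \<omega> \<in> Iv u (Y \<omega>) \<and> U k \<omega> \<in> Iv u (Y \<omega>)} \<in> sets M"
  unfolding Iv_def atLeastLessThan_iff by measurable

lemma Cu_meas: "Cu m u \<in> sets M"
proof -
  have fin: "finite {p. fst p \<in> {1..m} \<and> snd p \<in> {1..m} \<and> fst p \<noteq> snd p}"
    by (rule finite_subset[of _ "{1..m} \<times> {1..m}"]) auto
  show ?thesis unfolding Cu_def
    by (intro sets.Un sets.finite_UN fin pair_set_meas ballI) measurable
qed

lemma Cu_bound: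
  assumes m: "1 \<le> m" and th: "0 < \<theta>" "\<theta> \<le> 2"
  shows "emeasure M (Cu m u) \<le> 2 * ennreal (real m powr \<theta>) * (\<integral>\<^sup>+\<omega>. ennreal (FP u (Y \<omega>) powr \<theta>) \<partial>M)"
proof -
  let ?P = "{p. fst p \<in> {1..m} \<and> snd p \<in> {1..m} \<and> fst p \<noteq> snd p}"
  let ?A = "\<lambda>p. {\<omega>\<in>space M. FP u (Y \<omega>) \<le> 1 / real m \<and> U (fst p) \<omega> \<in> Iv u (Y \<omega>) \<and> U (snd p) \<omega> \<in> Iv u (Y \<omega>)}"
  let ?I = "(\<integral>\<^sup>+\<omega>. ennreal (FP u (Y \<omega>) powr \<theta>) \<partial>M)"
  have Psub: "?P \<subseteq> {1..m} \<times> {1..m}" by auto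
  have fin: "finite ?P" by (rule finite_subset[OF Psub]) auto
  have cardP: "card ?P \<le> m * m"
    using card_mono[OF _ Psub] by (simp add: card_cartesian_product)
  have mpos: "0 < real m" using m by simp
  have "emeasure M {\<omega>\<in>space M. 1 / real m < FP u (Y \<omega>)}
      = (\<integral>\<^sup>+\<omega>. indicator {\<omega>\<in>space M. 1 / real m < FP u (Y \<omega>)} \<omega> \<partial>M)"
    by (rule nn_integral_indicator[symmetric]) measurable
  also have "\<dots> \<le> (\<integral>\<^sup>+\<omega>. ennreal (real m powr \<theta>) * ennreal (FP u (Y \<omega>) powr \<theta>) \<partial>M)"
  proof (rule nn_integral_mono)
    fix \<omega>
    show "indicator {\<omega>\<in>space M. 1 / real m < FP u (Y \<omega>)} \<omega>
        \<le> ennreal (real m powr \<theta>) * ennreal (FP u (Y \<omega>) powr \<theta>)"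
    proof (cases "1 / real m < FP u (Y \<omega>)")
      case True
      hence "1 \<le> real m * FP u (Y \<omega>)" using mpos by (simp add: field_simps)
      hence "1 \<le> (real m * FP u (Y \<omega>)) powr \<theta>" using th by (intro ge_one_powr_ge_zero) auto
      also have "\<dots> = real m powr \<theta> * FP u (Y \<omega>) powr \<theta>"
        using FP_nonneg by (simp add: powr_mult)
      finally have "ennreal 1 \<le> ennreal (real m powr \<theta> * FP u (Y \<omega>) powr \<theta>)" by (rule ennreal_leI)
      thus ?thesis using True by (simp add: indicator_def ennreal_mult)
    qed (simp add: indicator_def)
  qed
  also have "\<dots> = ennreal (real m powr \<theta>) * ?I"
    by (rule nn_integral_cmult) simp
  finally have part1: "emeasure M {\<omega>\<in>space M. 1 / real m < FP u (Y \<omega>)} \<le> ennreal (real m powr \<theta>) * ?I" .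
  have "emeasure M (\<Union>p\<in>?P. ?A p) \<le> (\<Sum>p\<in>?P. emeasure M (?A p))"
    by (rule emeasure_subadditive_finite[OF fin]) (auto intro: pair_set_meas)
  also have "\<dots> \<le> (\<Sum>p\<in>?P. (\<integral>\<^sup>+\<omega>. ennreal ((FP u (Y \<omega>))^2) * indicator {\<omega>. FP u (Y \<omega>) \<le> 1 / real m} \<omega> \<partial>M))"
    by (intro sum_mono pair_bound) auto
  also have "\<dots> = of_nat (card ?P) * (\<integral>\<^sup>+\<omega>. ennreal ((FP u (Y \<omega>))^2) * indicator {\<omega>. FP u (Y \<omega>) \<le> 1 / real m} \<omega> \<partial>M)"
    by simp
  also have "\<dots> \<le> ennreal (real m * real m) * (\<integral>\<^sup>+\<omega>. ennreal ((FP u (Y \<omega>))^2) * indicator {\<omega>. FP u (Y \<omega>) \<le> 1 / real m} \<omega> \<partial>M)"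
  proof (rule mult_right_mono)
    have "real (card ?P) \<le> real m * real m"
      using cardP by (simp only: of_nat_mult[symmetric] of_nat_le_iff)
    thus "of_nat (card ?P) \<le> ennreal (real m * real m)"
      unfolding ennreal_of_nat_eq_real_of_nat by (rule ennreal_leI)
  qed (rule zero_le)
  also have "\<dots> = (\<integral>\<^sup>+\<omega>. ennreal (real m * real m) * (ennreal ((FP u (Y \<omega>))^2) * indicator {\<omega>. FP u (Y \<omega>) \<le> 1 / real m} \<omega>) \<partial>M)"
    by (rule nn_integral_cmult[symmetric]) measurable
  also have "\<dots> \<le> (\<integral>\<^sup>+\<omega>. ennreal (real m powr \<theta>) * ennreal (FP u (Y \<omega>) powr \<theta>) \<partial>M)"
  proof (rule nn_integral_mono)
    fix \<omega>
    let ?p = "FP u (Y \<omega>)"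
    show "ennreal (real m * real m) * (ennreal (?p^2) * indicator {\<omega>'. FP u (Y \<omega>') \<le> 1 / real m} \<omega>)
        \<le> ennreal (real m powr \<theta>) * ennreal (?p powr \<theta>)"
    proof (cases "?p \<le> 1 / real m")
      case True
      have p0: "0 \<le> ?p" by (rule FP_nonneg)
      have x1: "real m * ?p \<le> 1" using True mpos by (simp add: field_simps)
      have "real m * real m * ?p^2 = (real m * ?p) powr 2"
        using p0 mpos by (simp add: powr_numeral power2_eq_square)
      also have "\<dots> \<le> (real m * ?p) powr \<theta>"
        by (rule powr_mono') (use th x1 p0 mpos in auto)
      also have "\<dots> = real m powr \<theta> * ?p powr \<theta>" using p0 by (simp add: powr_mult)
      finally have "real m * real m * ?p^2 \<le> real m powr \<theta> * ?p powr \<theta>" .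
      hence "ennreal (real m * real m * ?p^2) \<le> ennreal (real m powr \<theta> * ?p powr \<theta>)" by (rule ennreal_leI)
      thus ?thesis using True p0 by (simp add: indicator_def ennreal_mult mult.assoc)
    qed (simp add: indicator_def)
  qed
  also have "\<dots> = ennreal (real m powr \<theta>) * ?I"
    by (rule nn_integral_cmult) simp
  finally have part2: "emeasure M (\<Union>p\<in>?P. ?A p) \<le> ennreal (real m powr \<theta>) * ?I" .
  have "emeasure M (Cu m u) \<le> emeasure M {\<omega>\<in>space M. 1 / real m < FP u (Y \<omega>)} + emeasure M (\<Union>p\<in>?P. ?A p)"
  proof -
    have s1: "{\<omega>\<in>space M. 1 / real m < FP u (Y \<omega>)} \<in> sets M" by measurable
    have s2: "(\<Union>p\<in>?P. ?A p) \<in> sets M" by (rule sets.finite_UN[OF fin pair_set_meas])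
    show ?thesis unfolding Cu_def by (rule emeasure_subadditive[OF s1 s2])
  qed
  also have "\<dots> \<le> ennreal (real m powr \<theta>) * ?I + ennreal (real m powr \<theta>) * ?I"
    by (intro add_mono part1 part2)
  also have "\<dots> = 2 * ennreal (real m powr \<theta>) * ?I"
    by (simp only: mult_2 distrib_right)
  finally show ?thesis .
qed

end

context setting begin

definition DB :: "nat \<Rightarrow> real \<Rightarrow> nat \<Rightarrow> 'a set" where
  "DB m t j = {\<omega>\<in>space M. (\<Sum>i<m. E i \<omega>) \<le> t} \<union> (\<Union>u\<in>{u. length u = j}. Cu m u)"

lemma DB_meas: "DB m t j \<in> sets M"
proof -
  have "{\<omega>\<in>space M. (\<Sum>i<m. E i \<omega>) \<le> t} \<in> sets M" by measurable
  moreover have "(\<Union>u\<in>{u::nat list. length u = j}. Cu m u) \<in> sets M"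
    by (rule sets.countable_UN''[OF _ Cu_meas]) simp
  ultimately show ?thesis unfolding DB_def by simp
qed

lemma DB_bound:
  assumes m: "1 \<le> m" and t: "0 \<le> t" and th: "0 < \<theta>" "\<theta> \<le> 2"
  shows "emeasure M (DB m t j) \<le> ennreal (t ^ m / fact (m - 1)) + 2 * ennreal (real m powr \<theta>) * Lsum Q \<theta> ^ j"
proof -
  have s1: "{\<omega>\<in>space M. (\<Sum>i<m. E i \<omega>) \<le> t} \<in> sets M" by measurable
  have s2: "(\<Union>u\<in>{u::nat list. length u = j}. Cu m u) \<in> sets M"
    by (rule sets.countable_UN''[OF _ Cu_meas]) simp
  have "emeasure M (\<Union>u\<in>{u::nat list. length u = j}. Cu m u)
      \<le> (\<integral>\<^sup>+u. emeasure M (Cu m u) \<partial>count_space {u. length u = j})"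
    by (rule union_bound[OF _ Cu_meas]) simp
  also have "\<dots> \<le> (\<integral>\<^sup>+u. 2 * ennreal (real m powr \<theta>) * (\<integral>\<^sup>+\<omega>. ennreal (FP u (Y \<omega>) powr \<theta>) \<partial>M) \<partial>count_space {u. length u = j})"
    by (intro nn_integral_mono Cu_bound m th)
  also have "\<dots> = 2 * ennreal (real m powr \<theta>) * (\<integral>\<^sup>+u. (\<integral>\<^sup>+\<omega>. ennreal (FP u (Y \<omega>) powr \<theta>) \<partial>M) \<partial>count_space {u. length u = j})"
    by (rule nn_integral_cmult) simp
  also have "\<dots> = 2 * ennreal (real m powr \<theta>) * Lsum Q \<theta> ^ j"
    by (simp only: sum_exp_prod)
  finally have b2: "emeasure M (\<Union>u\<in>{u::nat list. length u = j}. Cu m u) \<le> 2 * ennreal (real m powr \<theta>) * Lsum Q \<theta> ^ j" .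
  have "emeasure M (DB m t j) \<le> emeasure M {\<omega>\<in>space M. (\<Sum>i<m. E i \<omega>) \<le> t} + emeasure M (\<Union>u\<in>{u::nat list. length u = j}. Cu m u)"
    unfolding DB_def by (rule emeasure_subadditive[OF s1 s2])
  also have "\<dots> \<le> ennreal (t ^ m / fact (m - 1)) + 2 * ennreal (real m powr \<theta>) * Lsum Q \<theta> ^ j"
    by (intro add_mono erlang_bound m t b2)
  finally show ?thesis .
qed

lemma DB_cover:
  assumes \<omega>: "\<omega> \<in> space M" and Enn: "\<forall>i. 0 \<le> E i \<omega>" and Wnn: "\<forall>v k. 0 \<le> W v \<omega> k"
    and m: "1 \<le> m" and K: "Kpois W U E j t 2 \<omega> \<noteq> 0"
  shows "\<omega> \<in> DB m t j"
proof -
  from det_lemma[of E \<omega> m W U j t, OF _ m K] Enn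
  consider "(\<Sum>i<m. E i \<omega>) \<le> t"
    | u i k where "length u = j" "i \<in> {1..m-1}" "k \<in> {1..m-1}" "i \<noteq> k"
        "U i \<omega> \<in> box W u \<omega>" "U k \<omega> \<in> box W u \<omega>" by blast
  thus ?thesis
  proof cases
    case 1 thus ?thesis using \<omega> by (simp add: DB_def)
  next
    case 2
    have bx: "box W u \<omega> = Iv u (Y \<omega>)" using box_FP[OF Wnn] by (simp add: Iv_def)
    have "\<omega> \<in> Cu m u"
    proof (cases "1 / real m < FP u (Y \<omega>)")
      case True thus ?thesis using \<omega> by (simp add: Cu_def)
    next
      case False
      hence "\<omega> \<in> {\<omega>\<in>space M. FP u (Y \<omega>) \<le> 1 / real m \<and> U (fst (i,k)) \<omega> \<in> Iv u (Y \<omega>) \<and> U (snd (i,k)) \<omega> \<in> Iv u (Y \<omega>)}"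
        using \<omega> 2 bx by simp
      moreover have "(i, k) \<in> {p. fst p \<in> {1..m} \<and> snd p \<in> {1..m} \<and> fst p \<noteq> snd p}"
        using 2 by auto
      ultimately show ?thesis unfolding Cu_def by blast
    qed
    thus ?thesis using 2 by (auto simp: DB_def)
  qed
qed

lemma DA_cover:
  assumes \<omega>: "\<omega> \<in> space M" and Enn: "\<forall>i. 0 \<le> E i \<omega>"
    and K: "Kpois W U E j t 2 \<omega> \<noteq> 0"
  shows "\<omega> \<in> {\<omega>\<in>space M. (\<Sum>i<2. E i \<omega>) \<le> t}"
proof -
  from det_lemma[of E \<omega> 2 W U j t, OF _ _ K] Enn
  have "(\<Sum>i<2. E i \<omega>) \<le> t" by auto
  thus ?thesis using \<omega> by simp
qed

end

lemma pow_fact_le_exp: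
  fixes x :: real assumes "0 \<le> x" shows "x ^ n / fact n \<le> exp x"
proof -
  have s: "(\<lambda>k. x ^ k / fact k) sums exp x"
    using exp_converges[of x] by (simp add: divide_inverse mult.commute)
  have "sum (\<lambda>k. x ^ k / fact k) {n} \<le> suminf (\<lambda>k. x ^ k / fact k)"
    by (rule sum_le_suminf) (use s assms in \<open>auto simp: sums_iff\<close>)
  thus ?thesis using s by (simp add: sums_iff)
qed

lemma tail_bound:
  fixes t :: real
  assumes m: "1 \<le> m" and t: "0 \<le> t" and tm: "exp 2 * t \<le> real m"
  shows "t ^ m / fact (m - 1) \<le> 2 * exp (- real m / 2)"
proof -
  have mpos: "0 < real m" using m by simp
  have fm: "fact m = real m * fact (m - 1)"
    using m by (cases m) auto
  have "t / real m \<le> exp (-2)" using tm mpos by (simp add: field_simps exp_minus)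
  hence "(t / real m) ^ m \<le> exp (-2) ^ m" using t mpos by (intro power_mono) auto
  also have "\<dots> = exp (- 2 * real m)" by (simp add: exp_of_nat_mult[symmetric] mult.commute)
  finally have A: "(t / real m) ^ m \<le> exp (- 2 * real m)" .
  have B: "real m ^ m / fact m \<le> exp (real m)" by (rule pow_fact_le_exp) simp
  have "t ^ m / fact m = (t / real m) ^ m * (real m ^ m / fact m)"
    using mpos by (simp add: power_divide)
  also have "\<dots> \<le> exp (- 2 * real m) * exp (real m)"
    by (intro mult_mono A B) (use t in auto)
  also have "\<dots> = exp (- real m)" by (simp add: exp_add[symmetric])
  finally have C: "t ^ m / fact m \<le> exp (- real m)" .
  have "t ^ m / fact (m - 1) = real m * (t ^ m / fact m)"
    using mpos by (simp add: fm)
  also have "\<dots> \<le> real m * exp (- real m)" using C mpos by (intro mult_left_mono) auto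
  also have "\<dots> \<le> (2 * exp (real m / 2)) * exp (- real m)"
  proof (rule mult_right_mono)
    have "1 + real m / 2 \<le> exp (real m / 2)" by (rule exp_ge_add_one_self)
    thus "real m \<le> 2 * exp (real m / 2)" by linarith
  qed simp
  also have "\<dots> = 2 * exp (- real m / 2)"
    by (simp add: mult.assoc exp_add[symmetric])
  finally show ?thesis .
qed

lemma summable_exp_sqrt:
  fixes c :: real assumes "0 < c" shows "summable (\<lambda>j::nat. exp (- c * sqrt (real j)))"
proof (rule summable_comparison_test_ev)
  show "summable (\<lambda>j::nat. real j powr (-2))" by (simp add: summable_real_powr_iff)
  have "\<forall>\<^sub>F j in sequentially. exp (- c * sqrt (real j)) \<le> real j powr (-2)"
    using assms by real_asymp
  thus "\<forall>\<^sub>F j in sequentially. norm (exp (- c * sqrt (real j))) \<le> real j powr (-2)" by simp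
qed

lemma summable_main:
  fixes a \<epsilon> \<theta> :: real
  assumes a: "0 < a" and e: "0 < \<epsilon>" and th: "0 < \<theta>" "\<theta> \<le> 2"
  defines "t \<equiv> \<lambda>j::nat. exp (a * real j - \<epsilon> * sqrt (real j))"
  defines "m \<equiv> \<lambda>j::nat. nat \<lceil>exp 2 * t j\<rceil> + j + 2"
  shows "summable (\<lambda>j. t j ^ m j / fact (m j - 1) + 2 * real (m j) powr \<theta> * exp (- a * \<theta>) ^ j)"
proof (rule summable_add)
  have tpos: "0 < t j" for j by (simp add: t_def)
  have mge: "exp 2 * t j \<le> real (m j)" for j
    unfolding m_def by linarith
  show "summable (\<lambda>j. t j ^ m j / fact (m j - 1))"
  proof (rule summable_comparison_test)
    show "\<exists>N. \<forall>n\<ge>N. norm (t n ^ m n / fact (m n - 1)) \<le> 2 * exp (-1/2) ^ n"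
    proof (intro exI allI impI)
      fix n :: nat
      have "norm (t n ^ m n / fact (m n - 1)) = t n ^ m n / fact (m n - 1)"
        using tpos[of n] by simp
      also have "\<dots> \<le> 2 * exp (- real (m n) / 2)"
        by (rule tail_bound) (use tpos[of n] mge[of n] in \<open>auto simp: m_def\<close>)
      also have "\<dots> \<le> 2 * exp (- real n / 2)" by (simp add: m_def)
      also have "\<dots> = 2 * exp (-1/2) ^ n" by (simp add: exp_of_nat_mult[symmetric] mult.commute)
      finally show "norm (t n ^ m n / fact (m n - 1)) \<le> 2 * exp (-1/2) ^ n" .
    qed
    show "summable (\<lambda>n. 2 * exp (-1/2::real) ^ n)"
      by (intro summable_mult summable_geometric) simp
  qed
  let ?C = "(exp 2 + 1) powr \<theta>"
  show "summable (\<lambda>j. 2 * real (m j) powr \<theta> * exp (- a * \<theta>) ^ j)"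
  proof (rule summable_comparison_test_ev)
    show "summable (\<lambda>j. 2 * ?C * exp (- (\<theta> * \<epsilon>) * sqrt (real j)))"
      by (intro summable_mult summable_exp_sqrt) (use th e in simp)
    have ev: "\<forall>\<^sub>F j in sequentially. real j + 3 \<le> exp (a * real j - \<epsilon> * sqrt (real j))"
      using a e by real_asymp
    show "\<forall>\<^sub>F j in sequentially. norm (2 * real (m j) powr \<theta> * exp (- a * \<theta>) ^ j)
        \<le> 2 * ?C * exp (- (\<theta> * \<epsilon>) * sqrt (real j))"
      using ev
    proof eventually_elim
      case (elim j)
      have j3: "real j + 3 \<le> t j" using elim by (simp add: t_def)
      have "real (m j) \<le> exp 2 * t j + 1 + real j + 2"
        unfolding m_def using tpos[of j] by (simp add: of_nat_nat) linarith
      also have "\<dots> \<le> (exp 2 + 1) * t j" using j3 by (simp add: algebra_simps)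
      finally have mle: "real (m j) \<le> (exp 2 + 1) * t j" .
      have "real (m j) powr \<theta> \<le> ((exp 2 + 1) * t j) powr \<theta>"
        by (rule powr_mono2) (use th mle in auto)
      also have "\<dots> = ?C * t j powr \<theta>"
        using tpos[of j] by (simp add: powr_mult)
      finally have A: "real (m j) powr \<theta> \<le> ?C * t j powr \<theta>" .
      have "t j powr \<theta> * exp (- a * \<theta>) ^ j = exp (- (\<theta> * \<epsilon>) * sqrt (real j))"
      proof -
        have "t j powr \<theta> = exp (\<theta> * (a * real j - \<epsilon> * sqrt (real j)))"
          by (simp add: t_def powr_def)
        moreover have "exp (- a * \<theta>) ^ j = exp (real j * (- a * \<theta>))"
          by (rule exp_of_nat_mult[symmetric])
        ultimately show ?thesis by (simp add: exp_add[symmetric] algebra_simps)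
      qed
      hence "2 * real (m j) powr \<theta> * exp (- a * \<theta>) ^ j \<le> 2 * (?C * t j powr \<theta>) * exp (- a * \<theta>) ^ j"
        using A by (intro mult_right_mono mult_left_mono) auto
      also have "\<dots> = 2 * ?C * exp (- (\<theta> * \<epsilon>) * sqrt (real j))"
        using \<open>t j powr \<theta> * exp (- a * \<theta>) ^ j = _\<close> by (simp add: mult.assoc)
      finally show ?case by simp
    qed
  qed
qed

context setting begin

lemma BC_lemma:
  fixes t :: "nat \<Rightarrow> real"
  assumes D: "\<And>j. D j \<in> sets M" and S: "summable (\<lambda>j. measure M (D j))"
    and cov: "\<And>j \<omega>. \<omega> \<in> space M \<Longrightarrow> (\<forall>i. 0 \<le> E i \<omega>) \<Longrightarrow> (\<forall>v k. 0 \<le> W v \<omega> k) \<Longrightarrow>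
       Kpois W U E j (t j) 2 \<omega> \<noteq> 0 \<Longrightarrow> \<omega> \<in> D j"
  shows "AE \<omega> in M. (\<lambda>j. real (Kpois W U E j (t j) 2 \<omega>)) \<longlonglongrightarrow> 0"
proof -
  have "AE \<omega> in M. eventually (\<lambda>j. \<omega> \<in> space M - D j) sequentially"
    by (rule borel_cantelli_AE1[OF D _ S]) (simp add: less_top[symmetric])
  with AE_good AE_space show ?thesis
  proof (eventually_elim)
    case (elim \<omega>)
    from elim(3) have "eventually (\<lambda>j. Kpois W U E j (t j) 2 \<omega> = 0) sequentially"
    proof (rule eventually_mono)
      fix j assume "\<omega> \<in> space M - D j"
      thus "Kpois W U E j (t j) 2 \<omega> = 0" using cov[of \<omega> j] elim(1,2) by blast
    qed
    hence "eventually (\<lambda>j. real (Kpois W U E j (t j) 2 \<omega>) = 0) sequentially"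
      by (rule eventually_mono) simp
    thus ?case by (rule tendsto_eventually)
  qed
qed

lemma measure_le_of_emeasure:
  assumes "emeasure M A \<le> ennreal b" "0 \<le> b" shows "measure M A \<le> b"
  using assms by (simp add: emeasure_eq_measure)

lemma main_setting:
  fixes \<theta> \<epsilon> :: real
  assumes th: "0 < \<theta>" "\<theta> \<le> 2" and e: "0 < \<epsilon>"
  defines "a \<equiv> - lam Q \<theta> / \<theta>"
  defines "t \<equiv> \<lambda>j::nat. exp (a * real j - \<epsilon> * sqrt (real j))"
  shows "AE \<omega> in M. (\<lambda>j. real (Kpois W U E j (t j) 2 \<omega>)) \<longlonglongrightarrow> 0"
proof (cases "a \<le> 0")
  case True
  define D where "D j = {\<omega>\<in>space M. (\<Sum>i<2. E i \<omega>) \<le> t j}" for j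
  show ?thesis
  proof (rule BC_lemma[of D])
    show "D j \<in> sets M" for j unfolding D_def by measurable
    show "\<omega> \<in> D j" if "\<omega> \<in> space M" "\<forall>i. 0 \<le> E i \<omega>" "Kpois W U E j (t j) 2 \<omega> \<noteq> 0" for j \<omega>
      unfolding D_def by (rule DA_cover) (use that in auto)
    show "summable (\<lambda>j. measure M (D j))"
    proof (rule summable_comparison_test)
      show "summable (\<lambda>j::nat. exp (- (2 * \<epsilon>) * sqrt (real j)))"
        by (rule summable_exp_sqrt) (use e in simp)
      show "\<exists>N. \<forall>n\<ge>N. norm (measure M (D n)) \<le> exp (- (2 * \<epsilon>) * sqrt (real n))"
      proof (intro exI allI impI)
        fix n :: nat
        have "measure M (D n) \<le> t n ^ 2 / fact (2 - 1)"
          unfolding D_def by (rule measure_le_of_emeasure[OF erlang_bound]) (auto simp: t_def)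
        also have "\<dots> = exp (2 * (a * real n - \<epsilon> * sqrt (real n)))"
          by (simp add: t_def exp_add[symmetric] power2_eq_square)
        also have "\<dots> \<le> exp (- (2 * \<epsilon>) * sqrt (real n))"
          using True by (simp add: mult_nonpos_nonneg algebra_simps)
        finally show "norm (measure M (D n)) \<le> exp (- (2 * \<epsilon>) * sqrt (real n))" by simp
      qed
    qed
  qed
next
  case False
  hence apos: "0 < a" by simp
  define L where "L = enn2real (Lsum Q \<theta>)"
  have lamL: "lam Q \<theta> = ln L" by (simp add: lam_def L_def)
  have lneg: "lam Q \<theta> = - a * \<theta>" using th by (simp add: a_def)
  hence "ln L \<noteq> 0" using apos th lamL by simp
  hence L0: "L \<noteq> 0" by auto
  have Lpos: "0 < L" using L0 by (simp add: L_def enn2real_nonneg less_le)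
  have Lfin: "Lsum Q \<theta> = ennreal L"
    using L0 by (cases "Lsum Q \<theta>") (auto simp: L_def)
  have Lexp: "L = exp (- a * \<theta>)" using Lpos lamL lneg by (metis exp_ln)
  define m where "m j = nat \<lceil>exp 2 * t j\<rceil> + j + 2" for j
  define b where "b j = t j ^ m j / fact (m j - 1) + 2 * real (m j) powr \<theta> * exp (- a * \<theta>) ^ j" for j
  have b_sum: "summable b"
    unfolding b_def m_def t_def by (rule summable_main[OF apos e th])
  show ?thesis
  proof (rule BC_lemma[of "\<lambda>j. DB (m j) (t j) j"])
    show "DB (m j) (t j) j \<in> sets M" for j by (rule DB_meas)
    show "\<omega> \<in> DB (m j) (t j) j"
      if "\<omega> \<in> space M" "\<forall>i. 0 \<le> E i \<omega>" "\<forall>v k. 0 \<le> W v \<omega> k" "Kpois W U E j (t j) 2 \<omega> \<noteq> 0" for j \<omega>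
      by (rule DB_cover) (use that in \<open>auto simp: m_def\<close>)
    show "summable (\<lambda>j. measure M (DB (m j) (t j) j))"
    proof (rule summable_comparison_test[OF _ b_sum])
      show "\<exists>N. \<forall>n\<ge>N. norm (measure M (DB (m n) (t n) n)) \<le> b n"
      proof (intro exI allI impI)
        fix n :: nat
        have "emeasure M (DB (m n) (t n) n) \<le> ennreal (t n ^ m n / fact (m n - 1)) + 2 * ennreal (real (m n) powr \<theta>) * Lsum Q \<theta> ^ n"
          by (rule DB_bound) (use th in \<open>auto simp: m_def t_def\<close>)
        also have "\<dots> = ennreal (t n ^ m n / fact (m n - 1)) + ennreal (2 * real (m n) powr \<theta> * exp (- a * \<theta>) ^ n)"
          unfolding Lfin Lexp by (simp add: ennreal_mult ennreal_power)
        also have "\<dots> = ennreal (b n)"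
          unfolding b_def by (rule ennreal_plus[symmetric]) (auto simp: t_def)
        finally have "measure M (DB (m n) (t n) n) \<le> b n"
          by (rule measure_le_of_emeasure) (simp add: b_def t_def)
        thus "norm (measure M (DB (m n) (t n) n)) \<le> b n" by simp
      qed
    qed
  qed
qed

end

theorem lemma2:
  fixes M :: "'a measure"
    and Q :: "(nat \<Rightarrow> real) measure"
    and W :: "nat list \<Rightarrow> 'a \<Rightarrow> nat \<Rightarrow> real"
    and U :: "nat \<Rightarrow> 'a \<Rightarrow> real"
    and E :: "nat \<Rightarrow> 'a \<Rightarrow> real"
    and \<theta>s d \<epsilon> :: real
  assumes "prob_space M"
    and indep: "prob_space.indep_vars M (\<lambda>_. PiM UNIV (\<lambda>_. borel)) (src_var W U E) UNIV"
    and law: "\<And>u. distr M (PiM UNIV (\<lambda>_. borel)) (W u) = Q"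
    and nonneg_sum1: "AE x in Q. (\<forall>k. 0 \<le> x k) \<and> (\<lambda>k. x k) sums 1"
    and supercrit: "(\<integral>\<^sup>+ x. emeasure (count_space UNIV) {k. 0 < x k} \<partial>Q) > 1"
    and nonlattice: "\<And>a b. 0 < a \<Longrightarrow>
           measure Q {x. \<forall>k. 0 < x k \<longrightarrow> (\<exists>z::int. - ln (x k) = a * of_int z + b)} < 1"
    and unif: "\<And>i. distributed M lborel (U i) (\<lambda>x. indicator {0..1::real} x)"
    and expo: "\<And>i. distributed M lborel (E i) (exponential_density 1)"
    and \<theta>s_pos: "0 < \<theta>s"
    and \<theta>s_dom: "\<forall>\<^sub>F \<theta> in nhds \<theta>s. Lsum Q \<theta> < \<infinity>"
    and \<theta>s_deriv: "(lam Q has_real_derivative d) (at \<theta>s)"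
    and \<theta>s_eq: "\<theta>s * d - lam Q \<theta>s = 0"
    and \<epsilon>_pos: "0 < \<epsilon>"
  shows "AE \<omega> in M.
           (\<lambda>j. real (Kpois W U E j
               (exp ((if \<theta>s > 2 then - lam Q 2 / 2 else - lam Q \<theta>s / \<theta>s) * real j
                     - \<epsilon> * sqrt (real j))) 2 \<omega>)) \<longlonglongrightarrow> 0"
proof -
  have nnQ: "AE x in Q. \<forall>k. 0 \<le> x k" using nonneg_sum1 by eventually_elim auto
  interpret setting M Q W U E
    using assms(1) indep law nnQ unif expo by (intro setting.intro setting_axioms.intro) auto
  define \<theta> where "\<theta> = (if \<theta>s > 2 then 2 else \<theta>s)"
  have th: "0 < \<theta>" "\<theta> \<le> 2" using \<theta>s_pos by (auto simp: \<theta>_def)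
  have eq: "(if \<theta>s > 2 then - lam Q 2 / 2 else - lam Q \<theta>s / \<theta>s) = - lam Q \<theta> / \<theta>"
    by (simp add: \<theta>_def)
  show ?thesis unfolding eq using main_setting[OF th \<epsilon>_pos] by simp
qed

end
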